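(* Let $g:\Omega\to[0,1]$ be measurable with $\mathbb E[g]<1$, $g_{\omega,n}=\prod_{j=0}^{n-1}g(\theta^j\omega)$, and $\beta_1(r)=\|g-\mathbb E[g|\mathcal F_r]\|_{L^1(\Omega,\mathcal F,\mathbb P)}$. If $\beta_1(r)+\alpha(r)=O(r^{-M})$ for some $M>0$, then for every $0<x<1$ we have $\mathbb E[g_{\omega,n}]=O(n^{1-x(M+1)})$ as $n\to\infty$.
   Context: $(X_k)_{k\in\mathbb Z}$ is a stationary sequence with values in a measurable space $\Omega_0$ and $(\Omega,\mathcal F,\mathbb P,\theta)$ is its shift system: $\Omega=\Omega_0^{\mathbb Z}$, $\theta$ the left shift, $\mathbb P$ the law of the sequence, $\omega=(\omega_k)$. $\mathcal F_r$ is the $\sigma$-algebra generated by the coordinates $\omega_j$, $|j|\le r$. $\alpha(m)$ is the smallest number such that $|\mathbb P(A\cap B)-\mathbb P(A)\mathbb P(B)|\le\alpha(m)$ for all $k\in\mathbb N$, $A\in\sigma\{X_0,\dots,X_k\}$, $B\in\sigma\{X_{k+m},X_{k+m+1},\dots\}$. *)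

theory Defs
  imports "HOL-Probability.Probability" "HOL-Library.Landau_Symbols"
begin

definition shift :: "(int \<Rightarrow> 'a) \<Rightarrow> (int \<Rightarrow> 'a)" where
  "shift \<omega> = (\<lambda>k. \<omega> (k + 1))"

definition coord_alg :: "'a measure \<Rightarrow> int set \<Rightarrow> (int \<Rightarrow> 'a) measure" where
  "coord_alg M0 J = vimage_algebra (space (Pi\<^sub>M UNIV (\<lambda>_::int. M0)))
      (\<lambda>\<omega>. restrict \<omega> J) (Pi\<^sub>M J (\<lambda>_. M0))"

definition alpha_mix :: "'a measure \<Rightarrow> (int \<Rightarrow> 'a) measure \<Rightarrow> nat \<Rightarrow> real" where
  "alpha_mix M0 P m = Sup {\<bar>measure P (A \<inter> B) - measure P A * measure P B\<bar> | k A B.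
      A \<in> sets (coord_alg M0 {0..int k}) \<and> B \<in> sets (coord_alg M0 {int k + int m..})}"

definition beta1 :: "'a measure \<Rightarrow> (int \<Rightarrow> 'a) measure \<Rightarrow> ((int \<Rightarrow> 'a) \<Rightarrow> real) \<Rightarrow> nat \<Rightarrow> real" where
  "beta1 M0 P g r = (\<integral>\<omega>. \<bar>g \<omega> - real_cond_exp P (coord_alg M0 {- int r..int r}) g \<omega>\<bar> \<partial>P)"

end

theory Submission
  imports Defs "HOL-Real_Asymp.Real_Asymp"
begin


lemma shift_pow: "(shift ^^ j) \<omega> = (\<lambda>k. \<omega> (k + int j))"
  by (induction j arbitrary: \<omega>) (auto simp: shift_def algebra_simps)

lemma coord_sets_eq:
  "sets (coord_alg M0 J) = {(\<lambda>\<omega>. restrict \<omega> J) -` A \<inter> space (Pi\<^sub>M UNIV (\<lambda>_::int. M0)) | A. A \<in> sets (Pi\<^sub>M J (\<lambda>_. M0))}"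
  unfolding coord_alg_def
  by (rule sets_vimage_algebra2) (auto simp: space_PiM)

lemma coord_space: "space (coord_alg M0 J) = space (Pi\<^sub>M UNIV (\<lambda>_::int. M0))"
  unfolding coord_alg_def by simp

lemma coord_sub: "sets (coord_alg M0 J) \<subseteq> sets (Pi\<^sub>M UNIV (\<lambda>_::int. M0))"
  unfolding coord_alg_def
  by (rule sets_image_in_sets) (auto intro: measurable_restrict_subset)

lemma coord_mono:
  assumes "J \<subseteq> J'"
  shows "sets (coord_alg M0 J) \<subseteq> sets (coord_alg M0 J')"
proof
  fix X assume "X \<in> sets (coord_alg M0 J)"
  then obtain A where A: "A \<in> sets (Pi\<^sub>M J (\<lambda>_. M0))"
    and X: "X = (\<lambda>\<omega>. restrict \<omega> J) -` A \<inter> space (Pi\<^sub>M UNIV (\<lambda>_::int. M0))"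
    by (auto simp: coord_sets_eq)
  define A' where "A' = (\<lambda>\<omega>. restrict \<omega> J) -` A \<inter> space (Pi\<^sub>M J' (\<lambda>_. M0))"
  have "A' \<in> sets (Pi\<^sub>M J' (\<lambda>_. M0))"
    unfolding A'_def using measurable_restrict_subset[OF assms] A by (rule measurable_sets)
  moreover have "X = (\<lambda>\<omega>. restrict \<omega> J') -` A' \<inter> space (Pi\<^sub>M UNIV (\<lambda>_::int. M0))"
    using assms unfolding X A'_def by (auto simp: space_PiM restrict_restrict Int_absorb1 PiE_iff)
  ultimately show "X \<in> sets (coord_alg M0 J')"
    by (auto simp: coord_sets_eq)
qed

lemma coord_shift:
  assumes "X \<in> sets (coord_alg M0 J)"
  shows "(shift ^^ j) -` X \<inter> space (Pi\<^sub>M UNIV (\<lambda>_::int. M0)) \<in> sets (coord_alg M0 ((\<lambda>i. i + int j) ` J))"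
proof -
  obtain A where A: "A \<in> sets (Pi\<^sub>M J (\<lambda>_. M0))"
    and X: "X = (\<lambda>\<omega>. restrict \<omega> J) -` A \<inter> space (Pi\<^sub>M UNIV (\<lambda>_::int. M0))"
    using assms by (auto simp: coord_sets_eq)
  define J' where "J' = (\<lambda>i. i + int j) ` J"
  define \<Phi> where "\<Phi> = (\<lambda>x::int \<Rightarrow> 'a. \<lambda>i\<in>J. x (i + int j))"
  have "\<Phi> \<in> measurable (Pi\<^sub>M J' (\<lambda>_. M0)) (Pi\<^sub>M J (\<lambda>_. M0))"
    unfolding \<Phi>_def J'_def
    by (intro measurable_restrict measurable_component_singleton) auto
  then have A': "\<Phi> -` A \<inter> space (Pi\<^sub>M J' (\<lambda>_. M0)) \<in> sets (Pi\<^sub>M J' (\<lambda>_. M0))"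
    using A by (rule measurable_sets)
  have "(shift ^^ j) -` X \<inter> space (Pi\<^sub>M UNIV (\<lambda>_::int. M0)) =
     (\<lambda>\<omega>. restrict \<omega> J') -` (\<Phi> -` A \<inter> space (Pi\<^sub>M J' (\<lambda>_. M0))) \<inter> space (Pi\<^sub>M UNIV (\<lambda>_::int. M0))"
  proof -
    have e: "\<Phi> (restrict \<omega> J') = restrict ((shift ^^ j) \<omega>) J" for \<omega>
      unfolding \<Phi>_def J'_def shift_pow by (auto simp: restrict_def fun_eq_iff)
    have sp: "(shift ^^ j) \<omega> \<in> space (Pi\<^sub>M UNIV (\<lambda>_::int. M0))" if "\<omega> \<in> space (Pi\<^sub>M UNIV (\<lambda>_::int. M0))" for \<omega>
      using that by (auto simp: space_PiM shift_pow PiE_iff)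
    show ?thesis unfolding X using sp by (auto simp: e space_PiM PiE_iff)
  qed
  then show ?thesis using A' unfolding J'_def[symmetric] coord_sets_eq by blast
qed



locale stat =
  fixes M0 :: "'a measure" and P :: "(int \<Rightarrow> 'a) measure" and g :: "(int \<Rightarrow> 'a) \<Rightarrow> real"
  assumes ps: "prob_space P"
    and setsP: "sets P = sets (Pi\<^sub>M UNIV (\<lambda>_::int. M0))"
    and shm: "shift \<in> P \<rightarrow>\<^sub>M P" and shd: "distr P P shift = P"
    and gm: "g \<in> borel_measurable P"
    and gb: "\<And>\<omega>. \<omega> \<in> space P \<Longrightarrow> 0 \<le> g \<omega> \<and> g \<omega> \<le> 1"
begin
end

sublocale stat \<subseteq> prob_space P by (rule ps)

context stat begin

lemma spaceP: "space P = space (Pi\<^sub>M UNIV (\<lambda>_::int. M0))"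
  using setsP by (rule sets_eq_imp_space_eq)

lemma coord_subalg: "subalgebra P (coord_alg M0 J)"
  unfolding subalgebra_def using coord_sub[of M0 J] coord_space[of M0 J] spaceP setsP by auto

lemma coord_sfs: "sigma_finite_subalgebra P (coord_alg M0 J)"
proof -
  interpret finite_measure_subalgebra P "coord_alg M0 J"
    by unfold_locales (rule coord_subalg)
  show ?thesis by (rule sigma_finite_subalgebra_axioms)
qed

lemma coord_setsP: "X \<in> sets (coord_alg M0 J) \<Longrightarrow> X \<in> sets P"
  using coord_sub setsP by blast

lemma T_meas: "(shift ^^ j) \<in> P \<rightarrow>\<^sub>M P"
  by (induction j) (auto intro: measurable_compose[OF _ shm])

lemma T_distr: "distr P P (shift ^^ j) = P"
proof (induction j)
  case 0 then show ?case by (simp add: distr_id2)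
next
  case (Suc j)
  have "distr P P (shift ^^ Suc j) = distr P P (shift \<circ> (shift ^^ j))" by simp
  also have "\<dots> = distr (distr P P (shift ^^ j)) P shift"
    using distr_distr[OF shm T_meas[of j]] by simp
  also have "\<dots> = P" using Suc shd by simp
  finally show ?case .
qed

lemma T_measure: "A \<in> sets P \<Longrightarrow> measure P ((shift ^^ j) -` A \<inter> space P) = measure P A"
proof -
  assume A: "A \<in> sets P"
  have "measure (distr P P (shift ^^ j)) A = measure P ((shift ^^ j) -` A \<inter> space P)"
    using T_meas A by (rule measure_distr)
  then show ?thesis using T_distr by simp
qed

lemma T_space: "\<omega> \<in> space P \<Longrightarrow> (shift ^^ j) \<omega> \<in> space P"
  by (rule measurable_space[OF T_meas])

lemma alpha_bdd: "bdd_above {\<bar>measure P (A \<inter> B) - measure P A * measure P B\<bar> | k A B.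
      A \<in> sets (coord_alg M0 {0..int k}) \<and> B \<in> sets (coord_alg M0 {int k + int m..})}"
proof (rule bdd_aboveI[where M=1], clarify)
  fix k A B
  have "0 \<le> measure P (A \<inter> B)" "measure P (A \<inter> B) \<le> 1" "0 \<le> measure P A" "measure P A \<le> 1"
     "0 \<le> measure P B" "measure P B \<le> 1" by auto
  then have "0 \<le> measure P A * measure P B" "measure P A * measure P B \<le> 1"
    by (simp_all add: mult_le_one)
  then show "\<bar>measure P (A \<inter> B) - measure P A * measure P B\<bar> \<le> 1"
    using \<open>0 \<le> measure P (A \<inter> B)\<close> \<open>measure P (A \<inter> B) \<le> 1\<close> by linarith
qed

lemma alpha_le:
  assumes "A \<in> sets (coord_alg M0 {0..int k})" "B \<in> sets (coord_alg M0 {int k + int m..})"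
  shows "\<bar>measure P (A \<inter> B) - measure P A * measure P B\<bar> \<le> alpha_mix M0 P m"
  unfolding alpha_mix_def
  by (rule cSup_upper[OF _ alpha_bdd]) (use assms in blast)

lemma alpha_nonneg: "0 \<le> alpha_mix M0 P m"
proof -
  have "space P \<in> sets (coord_alg M0 {0..int 0})"
    using coord_space[of M0] spaceP by (metis sets.top)
  moreover have "space P \<in> sets (coord_alg M0 {int 0 + int m..})"
    using coord_space[of M0] spaceP by (metis sets.top)
  ultimately have "\<bar>measure P (space P \<inter> space P) - measure P (space P) * measure P (space P)\<bar> \<le> alpha_mix M0 P m"
    by (rule alpha_le)
  then show ?thesis by linarith
qed

lemma beta_nonneg: "0 \<le> beta1 M0 P g r"
  unfolding beta1_def by (rule integral_nonneg_AE) simp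

end


locale win = stat +
  fixes r :: nat and t \<delta> :: real
  assumes r1: "1 \<le> r" and dpos: "0 < \<delta>"
begin

definition "hh = real_cond_exp P (coord_alg M0 {- int r..int r}) g"
definition "Bs = {\<omega> \<in> space P. hh \<omega> < t + \<delta>}"
definition "Bad = {\<omega> \<in> space P. \<delta> \<le> \<bar>g \<omega> - hh \<omega>\<bar>}"
definition "cen w = 3*r*w + r"
definition "Bw w = (shift ^^ cen w) -` Bs \<inter> space P"
definition "Badw w = (shift ^^ cen w) -` Bad \<inter> space P"
definition "q = measure P Bs"

lemma hh_meas: "hh \<in> borel_measurable (coord_alg M0 {- int r..int r})"
  unfolding hh_def by (rule borel_measurable_cond_exp)

lemma hh_measP: "hh \<in> borel_measurable P"
  by (rule measurable_from_subalg[OF coord_subalg hh_meas])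

lemma g_int: "integrable P g"
  by (rule integrable_const_bound[where B=1]) (use gb gm in auto)

lemma hh_int: "integrable P hh"
  unfolding hh_def by (rule sigma_finite_subalgebra.real_cond_exp_int(1)[OF coord_sfs g_int])

lemma Bs_coord: "Bs \<in> sets (coord_alg M0 {- int r..int r})"
proof -
  have "{\<omega> \<in> space (coord_alg M0 {- int r..int r}). hh \<omega> < t + \<delta>} \<in> sets (coord_alg M0 {- int r..int r})"
    using hh_meas by measurable
  then show ?thesis unfolding Bs_def coord_space spaceP .
qed

lemma Bs_sets: "Bs \<in> sets P"
  by (rule coord_setsP[OF Bs_coord])

lemma Bad_sets: "Bad \<in> sets P"
  unfolding Bad_def using hh_measP gm by measurable

lemma markov: "measure P Bad \<le> beta1 M0 P g r / \<delta>"
proof -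
  have "integrable P (\<lambda>\<omega>. \<bar>g \<omega> - hh \<omega>\<bar>)"
    using g_int hh_int by auto
  then have "measure P {x\<in>space P. \<bar>g x - hh x\<bar> \<ge> \<delta>} \<le> (\<integral>x. \<bar>g x - hh x\<bar> \<partial>P) / \<delta>"
    by (rule integral_Markov_inequality_measure[where A="space P"]) (use dpos in auto)
  then show ?thesis unfolding Bad_def beta1_def hh_def by simp
qed

lemma q_lower: "measure P {\<omega> \<in> space P. g \<omega> \<le> t} \<le> q + beta1 M0 P g r / \<delta>"
proof -
  have "{\<omega> \<in> space P. g \<omega> \<le> t} \<subseteq> Bs \<union> Bad"
    unfolding Bs_def Bad_def by auto
  then have "measure P {\<omega> \<in> space P. g \<omega> \<le> t} \<le> measure P (Bs \<union> Bad)"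
    using Bs_sets Bad_sets by (intro finite_measure_mono) auto
  also have "\<dots> \<le> q + measure P Bad"
    unfolding q_def using Bs_sets Bad_sets by (rule measure_Un_le)
  finally show ?thesis using markov by linarith
qed

lemma img_int: "(\<lambda>i. i + int c) ` {- int r..int r} = {int c - int r..int c + int r}"
proof -
  have "x \<in> (\<lambda>i. i + int c) ` {- int r..int r}" if "x \<in> {int c - int r..int c + int r}" for x
    using that by (intro image_eqI[where x="x - int c"]) auto
  then show ?thesis by auto
qed

lemma Bw_coord: "Bw w \<in> sets (coord_alg M0 {int (3*r*w)..int (3*r*w + 2*r)})"
proof -
  have "Bw w \<in> sets (coord_alg M0 ((\<lambda>i. i + int (cen w)) ` {- int r..int r}))"
    unfolding Bw_def spaceP by (rule coord_shift[OF Bs_coord])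
  moreover have "(\<lambda>i. i + int (cen w)) ` {- int r..int r} = {int (3*r*w)..int (3*r*w + 2*r)}"
    unfolding img_int cen_def by auto
  ultimately show ?thesis by metis
qed

lemma Bw_sets: "Bw w \<in> sets P"
  by (rule coord_setsP[OF Bw_coord])

lemma Badw_sets: "Badw w \<in> sets P"
  unfolding Badw_def using T_meas Bad_sets by (rule measurable_sets)

lemma Bw_meas: "measure P (Bw w) = q"
  unfolding Bw_def q_def using Bs_sets by (rule T_measure)

lemma Badw_meas: "measure P (Badw w) = measure P Bad"
  unfolding Badw_def using Bad_sets by (rule T_measure)

lemma good_point:
  assumes "\<omega> \<in> Bw w" "\<omega> \<notin> Badw w"
  shows "g ((shift ^^ cen w) \<omega>) < t + 2*\<delta>"
proof -
  have sp: "\<omega> \<in> space P" using assms unfolding Bw_def by auto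
  have "(shift ^^ cen w) \<omega> \<in> Bs" using assms unfolding Bw_def by auto
  moreover have "(shift ^^ cen w) \<omega> \<notin> Bad" using assms sp unfolding Badw_def by auto
  ultimately show ?thesis unfolding Bs_def Bad_def by auto
qed

definition "E j a = {\<omega> \<in> space P. \<forall>i<j. \<omega> \<notin> Bw (a+i)}"

lemma E_coord:
  assumes "3*r*(a+j) \<le> k + r"
  shows "E j a \<in> sets (coord_alg M0 {0..int k})"
  using assms
proof (induction j)
  case 0
  have "E 0 a = space (coord_alg M0 {0..int k})"
    unfolding E_def coord_space spaceP by simp
  then show ?case by simp
next
  case (Suc j)
  have "3*r*(a+j) + 3*r \<le> k + r" using Suc.prems by (simp add: algebra_simps)
  then have le: "3*r*(a+j) + 2*r \<le> k" by linarith
  have IH: "E j a \<in> sets (coord_alg M0 {0..int k})"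
    using Suc by simp
  have "int (3*r*(a+j) + 2*r) \<le> int k" using le by (simp only: of_nat_le_iff)
  then have sub: "{int (3*r*(a+j))..int (3*r*(a+j) + 2*r)} \<subseteq> {0..int k}" by auto
  have "Bw (a+j) \<in> sets (coord_alg M0 {0..int k})"
    by (rule subsetD[OF coord_mono[OF sub] Bw_coord])
  then have "space (coord_alg M0 {0..int k}) - Bw (a+j) \<in> sets (coord_alg M0 {0..int k})"
    by auto
  then have "E j a \<inter> (space (coord_alg M0 {0..int k}) - Bw (a+j)) \<in> sets (coord_alg M0 {0..int k})"
    using IH by auto
  moreover have "E (Suc j) a = E j a \<inter> (space (coord_alg M0 {0..int k}) - Bw (a+j))"
    unfolding E_def coord_space spaceP[symmetric] by (auto simp: less_Suc_eq)
  ultimately show ?case by simp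
qed

lemma E_bound:
  assumes "1 \<le> a"
  shows "measure P (E j a) \<le> (1-q)^j + j * alpha_mix M0 P r"
proof (induction j)
  case 0
  then show ?case by simp
next
  case (Suc j)
  define w where "w = a + j"
  define k where "k = 3*r*w - r"
  have w1: "1 \<le> w" using assms w_def by simp
  have "3*r*w \<ge> 3 * r" using w1 by simp
  then have kr: "int k + int r = int (3*r*w)" unfolding k_def using r1 by simp
  have A: "E j a \<in> sets (coord_alg M0 {0..int k})"
    by (rule E_coord) (unfold k_def w_def, simp)
  have sub: "{int (3*r*w)..int (3*r*w + 2*r)} \<subseteq> {int k + int r..}" using kr by auto
  have "Bw w \<in> sets (coord_alg M0 {int k + int r..})"
    by (rule subsetD[OF coord_mono[OF sub] Bw_coord])
  then have B: "space P - Bw w \<in> sets (coord_alg M0 {int k + int r..})"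
    using coord_space[of M0] spaceP by (metis sets.compl_sets)
  have "\<bar>measure P (E j a \<inter> (space P - Bw w)) - measure P (E j a) * measure P (space P - Bw w)\<bar>
      \<le> alpha_mix M0 P r"
    by (rule alpha_le[OF A B])
  moreover have "measure P (space P - Bw w) = 1 - q"
    using prob_compl[OF Bw_sets] Bw_meas by simp
  moreover have eq: "E (Suc j) a = E j a \<inter> (space P - Bw w)"
    unfolding E_def w_def by (auto simp: less_Suc_eq)
  ultimately have st: "measure P (E (Suc j) a) \<le> measure P (E j a) * (1 - q) + alpha_mix M0 P r"
    unfolding eq by (simp add: abs_le_iff)
  have q01: "0 \<le> 1 - q" "1 - q \<le> 1" unfolding q_def by auto
  have "measure P (E j a) * (1 - q) \<le> ((1-q)^j + j * alpha_mix M0 P r) * (1 - q)"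
    by (rule mult_right_mono[OF Suc.IH q01(1)])
  also have "\<dots> = (1-q)^Suc j + j * alpha_mix M0 P r * (1 - q)"
    by (simp add: algebra_simps)
  also have "\<dots> \<le> (1-q)^Suc j + j * alpha_mix M0 P r"
    using q01 alpha_nonneg[of r] by (simp add: mult_left_le)
  finally show ?case using st by (simp add: algebra_simps)
qed

lemma E_sets: "E j a \<in> sets P"
  by (rule coord_setsP[OF E_coord[where k="3*r*(a+j)"]]) simp

lemma main_bound:
  assumes n: "3*r*(K*N+1) \<le> n" and s0: "0 \<le> t + 2*\<delta>"
  shows "(\<integral>\<omega>. (\<Prod>j<n. g ((shift^^j) \<omega>)) \<partial>P) \<le> (t+2*\<delta>)^K + real (K*N) * (beta1 M0 P g r / \<delta>)
           + real K * ((1-q)^N + real N * alpha_mix M0 P r)"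
proof -
  define s where "s = t + 2*\<delta>"
  define F where "F \<omega> = (\<Prod>j<n. g ((shift^^j) \<omega>))" for \<omega>
  have F_meas: "F \<in> borel_measurable P"
    unfolding F_def by (intro borel_measurable_prod measurable_compose[OF T_meas gm])
  have F01: "0 \<le> F \<omega> \<and> F \<omega> \<le> 1" if "\<omega> \<in> space P" for \<omega>
    unfolding F_def using gb T_space[OF that] by (auto intro: prod_nonneg prod_le_1)
  define BA where "BA = (\<Union>w\<in>{1..K*N}. Badw w) \<union> (\<Union>b\<in>{..<K}. E N (b*N+1))"
  have BA_sets: "BA \<in> sets P"
    unfolding BA_def using Badw_sets E_sets by auto
  have pt: "F \<omega> \<le> s^K" if om: "\<omega> \<in> space P" "\<omega> \<notin> BA" for \<omega>
  proof -
    have "\<forall>b\<in>{..<K}. \<exists>i. i < N \<and> \<omega> \<in> Bw (b*N+1+i)"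
    proof
      fix b assume "b \<in> {..<K}"
      then have "\<omega> \<notin> E N (b*N+1)" using om unfolding BA_def by auto
      then show "\<exists>i. i < N \<and> \<omega> \<in> Bw (b*N+1+i)" using om unfolding E_def by auto
    qed
    then obtain f where f: "\<And>b. b < K \<Longrightarrow> f b < N \<and> \<omega> \<in> Bw (b*N+1+f b)"
      by (metis bchoice lessThan_iff)
    define wf where "wf b = b*N+1+f b" for b
    have wf_rng: "1 \<le> wf b \<and> wf b \<le> K*N" if "b < K" for b
    proof -
      have "Suc b \<le> K" using that by simp
      then have "Suc b * N \<le> K * N" by (rule mult_right_mono) simp
      then show ?thesis using f[OF that] unfolding wf_def by simp
    qed
    have wf_mono: "wf b < wf b'" if "b < b'" "b' < K" for b b'
    proof -
      have "Suc b \<le> b'" using that by simp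
      then have "Suc b * N \<le> b' * N" by (rule mult_right_mono) simp
      then show ?thesis using f[of b] that unfolding wf_def by simp
    qed
    have cen_mono: "cen w < cen w'" if "w < w'" for w w'
      unfolding cen_def using that r1 by simp
    define C where "C = (\<lambda>b. cen (wf b)) ` {..<K}"
    have inj: "inj_on (\<lambda>b. cen (wf b)) {..<K}"
    proof (rule inj_onI)
      fix b b' assume "b \<in> {..<K}" "b' \<in> {..<K}" "cen (wf b) = cen (wf b')"
      then show "b = b'"
        using wf_mono cen_mono by (metis lessThan_iff less_irrefl linorder_neqE_nat)
    qed
    have cardC: "card C = K" unfolding C_def using inj by (simp add: card_image)
    have C_sub: "C \<subseteq> {..<n}"
    proof
      fix c assume "c \<in> C"
      then obtain b where b: "b < K" "c = cen (wf b)" unfolding C_def by auto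
      have "3*r*wf b \<le> 3*r*(K*N)" using wf_rng[OF b(1)] by simp
      moreover have "3*r*(K*N+1) = 3*r*(K*N) + 3*r" by (simp add: algebra_simps)
      moreover have "c = 3*r*wf b + r" using b unfolding cen_def by simp
      ultimately have "c < 3*r*(K*N+1)" using r1 by linarith
      then show "c \<in> {..<n}" using n by simp
    qed
    have C_small: "g ((shift^^c) \<omega>) \<le> s" if "c \<in> C" for c
    proof -
      obtain b where b: "b < K" "c = cen (wf b)" using \<open>c \<in> C\<close> unfolding C_def by auto
      have "\<omega> \<notin> Badw (wf b)" using om wf_rng[OF b(1)] unfolding BA_def by auto
      moreover have "\<omega> \<in> Bw (wf b)" using f[OF b(1)] unfolding wf_def by simp
      ultimately show ?thesis using good_point b(2) unfolding s_def by fastforce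
    qed
    have "F \<omega> = (\<Prod>j\<in>{..<n} - C. g ((shift^^j) \<omega>)) * (\<Prod>j\<in>C. g ((shift^^j) \<omega>))"
      unfolding F_def by (rule prod.subset_diff[OF C_sub]) simp
    also have "\<dots> \<le> 1 * (\<Prod>j\<in>C. g ((shift^^j) \<omega>))"
      using gb T_space[OF om(1)] by (intro mult_right_mono prod_le_1 prod_nonneg) auto
    also have "\<dots> \<le> (\<Prod>j\<in>C. s)"
      unfolding mult_1 using gb T_space[OF om(1)] C_small by (intro prod_mono) auto
    also have "\<dots> = s^K" using cardC by simp
    finally show ?thesis .
  qed
  have sK: "0 \<le> s^K" using s0 unfolding s_def by simp
  have pt2: "F \<omega> \<le> s^K + indicator BA \<omega>" if "\<omega> \<in> space P" for \<omega>
    using pt[OF that] F01[OF that] sK by (cases "\<omega> \<in> BA") auto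
  have intF: "integrable P F"
    by (rule integrable_const_bound[where B=1]) (use F01 F_meas in auto)
  have intI: "integrable P (\<lambda>\<omega>. s^K + indicator BA \<omega>)"
    using BA_sets by (intro Bochner_Integration.integrable_add integrable_real_indicator) (auto simp: emeasure_eq_measure)
  have "(\<integral>\<omega>. F \<omega> \<partial>P) \<le> (\<integral>\<omega>. s^K + indicator BA \<omega> \<partial>P)"
    by (rule integral_mono[OF intF intI pt2])
  also have "\<dots> = s^K + measure P BA"
    using BA_sets by (subst Bochner_Integration.integral_add) (auto intro!: integrable_real_indicator simp: emeasure_eq_measure prob_space)
  finally have I1: "(\<integral>\<omega>. F \<omega> \<partial>P) \<le> s^K + measure P BA" .
  have "measure P BA \<le> measure P (\<Union>w\<in>{1..K*N}. Badw w) + measure P (\<Union>b\<in>{..<K}. E N (b*N+1))"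
    unfolding BA_def by (rule measure_Un_le) (use Badw_sets E_sets in auto)
  also have "\<dots> \<le> (\<Sum>w\<in>{1..K*N}. measure P (Badw w)) + (\<Sum>b\<in>{..<K}. measure P (E N (b*N+1)))"
    by (intro add_mono finite_measure_subadditive_finite) (use Badw_sets E_sets in auto)
  also have "\<dots> \<le> (\<Sum>w\<in>{1..K*N}. beta1 M0 P g r / \<delta>) + (\<Sum>b\<in>{..<K}. (1-q)^N + real N * alpha_mix M0 P r)"
    by (intro add_mono sum_mono) (auto simp: Badw_meas markov E_bound)
  also have "\<dots> = real (K*N) * (beta1 M0 P g r / \<delta>) + real K * ((1-q)^N + real N * alpha_mix M0 P r)"
    by simp
  finally show ?thesis using I1 unfolding F_def s_def by simp
qed

end
lemma polygeo:
  fixes \<rho> Pm :: real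
  assumes "0 < \<rho>" "\<rho> < 1"
  shows "\<exists>Cg>0. \<forall>k\<ge>1. (real k + 1) * \<rho>^k \<le> Cg * real k powr (- Pm)"
proof -
  define c where "c = ln \<rho>"
  have c0: "c < 0" unfolding c_def using assms by simp
  have rk: "\<rho>^k = exp (real k * c)" for k
    unfolding c_def exp_of_nat_mult using assms by simp
  have "(\<lambda>k::nat. (real k + 1) * exp (real k * c) * real k powr Pm) \<longlonglongrightarrow> 0"
    using c0 by real_asymp
  then have "Bseq (\<lambda>k::nat. (real k + 1) * exp (real k * c) * real k powr Pm)"
    by (intro convergent_imp_Bseq convergentI)
  then obtain Kb where Kb: "Kb > 0" "\<And>k::nat. norm ((real k + 1) * exp (real k * c) * real k powr Pm) \<le> Kb"
    by (auto elim: BseqE)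
  have "(real k + 1) * \<rho>^k \<le> Kb * real k powr (- Pm)" if "k \<ge> 1" for k :: nat
  proof -
    have kp: "real k powr Pm * real k powr (- Pm) = 1"
      using that by (simp add: powr_add[symmetric])
    have "(real k + 1) * \<rho>^k = (real k + 1) * exp (real k * c) * (real k powr Pm * real k powr (- Pm))"
      unfolding kp rk by simp
    also have "\<dots> = ((real k + 1) * exp (real k * c) * real k powr Pm) * real k powr (- Pm)"
      by (simp only: mult.assoc)
    also have "\<dots> \<le> Kb * real k powr (- Pm)"
      using Kb(2)[of k] by (intro mult_right_mono) auto
    finally show ?thesis .
  qed
  then show ?thesis using Kb(1) by blast
qed

lemma floor_bounds:
  fixes z :: real
  assumes "1 \<le> z"
  shows "z / 2 \<le> real (nat \<lfloor>z\<rfloor>)" "real (nat \<lfloor>z\<rfloor>) \<le> z" "1 \<le> nat \<lfloor>z\<rfloor>"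
proof -
  have f1: "1 \<le> \<lfloor>z\<rfloor>" using assms by (simp add: le_floor_iff)
  have e: "real (nat \<lfloor>z\<rfloor>) = real_of_int \<lfloor>z\<rfloor>" using f1 by simp
  have "z < real_of_int \<lfloor>z\<rfloor> + 1" by linarith
  moreover have "1 \<le> real_of_int \<lfloor>z\<rfloor>" using f1 by simp
  ultimately show "z / 2 \<le> real (nat \<lfloor>z\<rfloor>)" unfolding e by linarith
  show "real (nat \<lfloor>z\<rfloor>) \<le> z" unfolding e by simp
  show "1 \<le> nat \<lfloor>z\<rfloor>" using f1 by (simp add: le_nat_iff)
qed

lemma halfpow:
  fixes z b :: real
  assumes "0 < z"
  shows "(z / 2) powr (- b) = z powr (- b) * 2 powr b"
proof -
  have "(z/2) powr (-b) = z powr (-b) / 2 powr (-b)" by (rule powr_divide)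
  also have "2 powr (-b) = inverse (2 powr b)" by (rule powr_minus)
  finally have "(z/2) powr (-b) = z powr (-b) / inverse (2 powr b)" .
  then show ?thesis by (simp only: divide_inverse inverse_inverse_eq)
qed

context stat begin

lemma p_low:
  assumes "t = 1 - (1 - (\<integral>\<omega>. g \<omega> \<partial>P)) / 2" "(\<integral>\<omega>. g \<omega> \<partial>P) \<le> 1"
  shows "(1 - (\<integral>\<omega>. g \<omega> \<partial>P)) / 2 \<le> measure P {\<omega>\<in>space P. g \<omega> \<le> t}"
proof -
  define \<epsilon> where "\<epsilon> = 1 - (\<integral>\<omega>. g \<omega> \<partial>P)"
  define G where "G = {\<omega>\<in>space P. g \<omega> \<le> t}"
  have G: "G \<in> sets P" unfolding G_def using gm by measurable
  have gi: "integrable P g"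
    by (rule integrable_const_bound[where B=1]) (use gb gm in auto)
  have pt: "1 - g \<omega> \<le> \<epsilon>/2 + indicator G \<omega>" if "\<omega> \<in> space P" for \<omega>
  proof (cases "g \<omega> \<le> t")
    case True
    then have "indicator G \<omega> = (1::real)" using that unfolding G_def by simp
    then show ?thesis using gb[OF that] assms(2) unfolding \<epsilon>_def by auto
  next
    case False
    then have "indicator G \<omega> = (0::real)" using that unfolding G_def by simp
    then show ?thesis using False assms(1) unfolding \<epsilon>_def by linarith
  qed
  have "(\<integral>\<omega>. 1 - g \<omega> \<partial>P) \<le> (\<integral>\<omega>. \<epsilon>/2 + indicator G \<omega> \<partial>P)"
    using G gi pt
    by (intro integral_mono) (auto intro!: integrable_real_indicator simp: emeasure_eq_measure)
  moreover have "(\<integral>\<omega>. 1 - g \<omega> \<partial>P) = \<epsilon>"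
    unfolding \<epsilon>_def using gi by (subst Bochner_Integration.integral_diff) (auto simp: prob_space)
  moreover have "(\<integral>\<omega>. \<epsilon>/2 + indicator G \<omega> \<partial>P) = \<epsilon>/2 + measure P G"
    using G by (subst Bochner_Integration.integral_add)
      (auto intro!: integrable_real_indicator simp: emeasure_eq_measure prob_space)
  ultimately have h: "\<epsilon> \<le> \<epsilon>/2 + measure P G" by simp
  have "\<epsilon>/2 \<le> measure P G" using h by linarith
  then show ?thesis unfolding G_def \<epsilon>_def .
qed

end
context stat begin

lemma final:
  assumes Eg: "(\<integral>\<omega>. g \<omega> \<partial>P) < 1" and Mpos: "M > 0"
    and hyp: "(\<lambda>r. beta1 M0 P g r + alpha_mix M0 P r) \<in> O(\<lambda>r. real r powr (- M))"
    and x0: "0 < x" and x1: "x < 1"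
  shows "(\<lambda>n. \<integral>\<omega>. (\<Prod>j<n. g ((shift ^^ j) \<omega>)) \<partial>P) \<in> O(\<lambda>n. real n powr (1 - x * (M + 1)))"
proof -
  define \<epsilon> where "\<epsilon> = 1 - (\<integral>\<omega>. g \<omega> \<partial>P)"
  have e0: "0 < \<epsilon>" using Eg unfolding \<epsilon>_def by simp
  have "0 \<le> (\<integral>\<omega>. g \<omega> \<partial>P)" using gb by (intro integral_nonneg_AE) (auto intro!: AE_I2)
  then have e1: "\<epsilon> \<le> 1" unfolding \<epsilon>_def by simp
  define t where "t = 1 - \<epsilon>/2"
  define \<delta> where "\<delta> = \<epsilon>/6"
  define \<rho> where "\<rho> = 1 - \<epsilon>/6"
  have d0: "0 < \<delta>" unfolding \<delta>_def using e0 by simp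
  have rho0: "0 < \<rho>" "\<rho> < 1" unfolding \<rho>_def using e0 e1 by auto
  have ts: "t + 2*\<delta> = \<rho>" unfolding t_def \<delta>_def \<rho>_def by simp
  have plow: "\<epsilon>/2 \<le> measure P {\<omega>\<in>space P. g \<omega> \<le> t}"
    using p_low[of t] e1 e0 unfolding t_def \<epsilon>_def by simp
  define a where "a = 1 - x * (M + 1)"
  define y where "y = (1 - x) / 3"
  have y0: "0 < y" unfolding y_def using x1 by simp
  define Pm where "Pm = x * (M + 1) / y"
  have yPm: "y * Pm = x * (M + 1)" unfolding Pm_def using y0 by simp
  obtain Cg where Cg: "Cg > 0" "\<And>k. k \<ge> 1 \<Longrightarrow> (real k + 1) * \<rho>^k \<le> Cg * real k powr (- Pm)"
    using polygeo[OF rho0] by blast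
  obtain C0 where C0: "C0 > 0"
    "eventually (\<lambda>r. norm (beta1 M0 P g r + alpha_mix M0 P r) \<le> C0 * norm (real r powr (- M))) at_top"
    using landau_o.bigE[OF hyp] by blast
  have "(\<lambda>r::nat. C0 * real r powr (- M)) \<longlonglongrightarrow> 0"
    using Mpos by real_asymp
  then have ev2: "eventually (\<lambda>r. C0 * real r powr (- M) < \<epsilon> * \<delta> / 4) at_top"
    using e0 d0 by (intro order_tendstoD(2)) auto
  obtain R where R: "\<And>r. r \<ge> R \<Longrightarrow> norm (beta1 M0 P g r + alpha_mix M0 P r) \<le> C0 * norm (real r powr (- M))
      \<and> C0 * real r powr (- M) < \<epsilon> * \<delta> / 4"
    using eventually_conj[OF C0(2) ev2] unfolding eventually_at_top_linorder by blast
  have lim1: "filterlim (\<lambda>n::nat. real n powr x) at_top at_top" using x0 by real_asymp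
  have lim2: "filterlim (\<lambda>n::nat. real n powr y) at_top at_top" using y0 by real_asymp
  define Ctot where "Ctot = Cg * 2 powr Pm + (1/\<delta> + 1) * C0 * 2 powr (M + 1)"
  have ev_a: "eventually (\<lambda>n. max (real R) 1 \<le> real n powr x) at_top"
    using lim1 unfolding filterlim_at_top by blast
  have ev_b: "eventually (\<lambda>n. 6 \<le> real n powr y) at_top"
    using lim2 unfolding filterlim_at_top by blast
  have evn: "eventually (\<lambda>n. max (real R) 1 \<le> real n powr x \<and> 6 \<le> real n powr y \<and> 1 \<le> n) at_top"
    by (intro eventually_conj ev_a ev_b eventually_ge_at_top)
  have "eventually (\<lambda>n. norm (\<integral>\<omega>. (\<Prod>j<n. g ((shift ^^ j) \<omega>)) \<partial>P) \<le> Ctot * norm (real n powr a)) at_top"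
  proof (rule eventually_mono[OF evn], elim conjE)
    fix n :: nat
    assume hx: "max (real R) 1 \<le> real n powr x" and hy: "6 \<le> real n powr y" and n1: "1 \<le> n"
    have n1r: "1 \<le> real n" using n1 by simp
    define r where "r = nat \<lfloor>real n powr x\<rfloor>"
    define K where "K = nat \<lfloor>real n powr y\<rfloor>"
    have hx1: "1 \<le> real n powr x" using hx by simp
    have hy1: "1 \<le> real n powr y" using hy by simp
    note rb = floor_bounds[OF hx1, folded r_def]
    note Kb = floor_bounds[OF hy1, folded K_def]
    have rR: "R \<le> r"
    proof -
      have "int R \<le> \<lfloor>real n powr x\<rfloor>" using hx by (simp add: le_floor_iff)
      then show ?thesis unfolding r_def by simp
    qed
    have r1: "1 \<le> r" using rb(3) .
    have K1: "1 \<le> K" using Kb(3) .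
    have nK: "3*r*(K*K+1) \<le> n"
    proof -
      have k1: "1 \<le> real K" using K1 by simp
      have kk: "1 * 1 \<le> real K * real K" using k1 by (intro mult_mono) auto
      have "real (3*r*(K*K+1)) = 3 * real r * (real K * real K + 1)" by (simp add: algebra_simps)
      also have "\<dots> \<le> 3 * real r * (2 * (real K * real K))"
        using kk by (intro mult_left_mono) auto
      also have "\<dots> = 6 * (real r * (real K * real K))" by simp
      also have "\<dots> \<le> 6 * (real n powr x * (real n powr y * real n powr y))"
        using rb Kb by (intro mult_left_mono mult_mono) auto
      also have "\<dots> \<le> real n powr y * (real n powr x * (real n powr y * real n powr y))"
        using hy by (intro mult_right_mono) auto
      also have "\<dots> = real n powr (y + (x + (y + y)))"
        by (simp only: powr_add)
      also have "y + (x + (y + y)) = 1" unfolding y_def by (simp add: field_simps)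
      finally have "real (3*r*(K*K+1)) \<le> real n" using n1r by simp
      then show ?thesis by (simp only: of_nat_le_iff)
    qed
    interpret W: win M0 P g r t \<delta>
      by (intro win.intro stat_axioms win_axioms.intro r1 d0)
    define \<beta> where "\<beta> = beta1 M0 P g r"
    define \<alpha> where "\<alpha> = alpha_mix M0 P r"
    have b0: "0 \<le> \<beta>" unfolding \<beta>_def by (rule beta_nonneg)
    have a0: "0 \<le> \<alpha>" unfolding \<alpha>_def by (rule alpha_nonneg)
    have rp0: "0 \<le> real r powr (- M)" by simp
    have Rr: "\<beta> + \<alpha> \<le> C0 * real r powr (- M)" "C0 * real r powr (- M) < \<epsilon> * \<delta> / 4"
      using R[OF rR] b0 a0 unfolding \<beta>_def[symmetric] \<alpha>_def[symmetric] by auto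
    have bd: "\<beta> / \<delta> < \<epsilon> / 4"
      using Rr a0 d0 by (simp add: divide_less_eq algebra_simps)
    have ql: "\<epsilon> / 2 \<le> W.q + \<beta> / \<delta>"
      using W.q_lower plow unfolding \<beta>_def by linarith
    have q1: "W.q \<le> 1" unfolding W.q_def by simp
    have qr1: "0 \<le> 1 - W.q" using q1 by simp
    have qr2: "1 - W.q \<le> \<rho>" using ql bd e0 unfolding \<rho>_def by linarith
    note qr = qr1 qr2
    have pw: "(1 - W.q)^K \<le> \<rho>^K" using qr by (intro power_mono) auto
    have mb: "(\<integral>\<omega>. (\<Prod>j<n. g ((shift^^j) \<omega>)) \<partial>P) \<le> \<rho>^K + real (K*K) * (\<beta> / \<delta>)
           + real K * ((1-W.q)^K + real K * \<alpha>)"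
      using W.main_bound[OF nK] rho0 unfolding ts \<beta>_def \<alpha>_def by simp
    also have "\<dots> \<le> \<rho>^K + real (K*K) * (\<beta> / \<delta>) + real K * (\<rho>^K + real K * \<alpha>)"
      using pw by (intro add_left_mono mult_left_mono) auto
    also have "\<dots> = (real K + 1) * \<rho>^K + real K * real K * (\<beta> / \<delta> + \<alpha>)"
      by (simp add: algebra_simps)
    finally have E1: "(\<integral>\<omega>. (\<Prod>j<n. g ((shift^^j) \<omega>)) \<partial>P) \<le>
        (real K + 1) * \<rho>^K + real K * real K * (\<beta> / \<delta> + \<alpha>)" .
    have A1: "(real K + 1) * \<rho>^K \<le> Cg * real K powr (- Pm)" using Cg(2)[OF K1] .
    have Pm0: "0 \<le> Pm" unfolding Pm_def using x0 y0 Mpos by simp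
    have "real K powr (- Pm) \<le> (real n powr y / 2) powr (- Pm)"
      using Kb hy1 Pm0 n1 by (intro powr_mono2') auto
    also have "\<dots> = real n powr (- (x * (M + 1))) * 2 powr Pm"
      using halfpow[of "real n powr y" Pm] hy1 yPm n1 by (simp add: powr_powr)
    also have "\<dots> \<le> real n powr a * 2 powr Pm"
      using n1r unfolding a_def by (intro mult_right_mono powr_mono) auto
    finally have Kp: "real K powr (- Pm) \<le> real n powr a * 2 powr Pm" .
    have "Cg * real K powr (- Pm) \<le> Cg * (real n powr a * 2 powr Pm)"
      using Cg(1) by (intro mult_left_mono[OF Kp]) simp
    then have A2: "(real K + 1) * \<rho>^K \<le> Cg * 2 powr Pm * real n powr a"
      using A1 by (simp add: ac_simps)
    have ex: "(1/\<delta> + 1) * (\<beta> + \<alpha>) = \<beta> / \<delta> + \<alpha> / \<delta> + \<beta> + \<alpha>"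
      by (simp add: algebra_simps add_divide_distrib)
    have "0 \<le> \<alpha> / \<delta>" using a0 d0 by simp
    then have "\<beta> / \<delta> + \<alpha> \<le> (1/\<delta> + 1) * (\<beta> + \<alpha>)"
      unfolding ex using b0 by linarith
    also have "\<dots> \<le> (1/\<delta> + 1) * (C0 * real r powr (- M))"
      using Rr d0 by (intro mult_left_mono) auto
    finally have B1: "\<beta> / \<delta> + \<alpha> \<le> (1/\<delta> + 1) * C0 * real r powr (- M)" by simp
    have r0: "0 < real r" using r1 by simp
    have KKr: "real K * real K * real r \<le> real n"
    proof -
      have "K*K*r \<le> 3*r*(K*K+1)" by (simp add: algebra_simps)
      then have "K*K*r \<le> n" using nK by linarith
      then show ?thesis by (metis of_nat_le_iff of_nat_mult)
    qed
    have rM: "real r powr (- M) / real r = real r powr (- (M + 1))"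
    proof -
      have "real r powr (- (M + 1)) = real r powr (- M) * real r powr (- 1)"
        by (subst powr_add[symmetric]) simp
      moreover have "real r powr (- 1) = inverse (real r)" using r0 by (simp add: powr_minus)
      ultimately show ?thesis by (simp add: divide_inverse)
    qed
    have rle0: "real r powr (- (M + 1)) \<le> (real n powr x / 2) powr (- (M + 1))"
      using rb hx1 Mpos n1 by (intro powr_mono2') auto
    have rle1: "(real n powr x / 2) powr (- (M + 1)) = real n powr (- (x * (M + 1))) * 2 powr (M + 1)"
    proof -
      have xm: "x * (- M - 1) = - (x * (M + 1))" by (simp add: algebra_simps)
      show ?thesis using halfpow[of "real n powr x" "M + 1"] hx1 Mpos n1 by (simp add: powr_powr xm)
    qed
    have nn: "real n * real n powr (- (x * (M + 1))) = real n powr a"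
    proof -
      have "real n powr (1 - x*(M+1)) = real n powr 1 * real n powr (- (x*(M+1)))"
        by (subst powr_add[symmetric]) simp
      then show ?thesis using n1r unfolding a_def by simp
    qed
    define D where "D = (1/\<delta> + 1) * C0"
    have D0: "0 \<le> D" unfolding D_def using d0 C0(1) by simp
    have rr: "real r * (real r powr (- M) / real r) = real r powr (- M)" using r0 by simp
    have "real K * real K * (\<beta> / \<delta> + \<alpha>) \<le> real K * real K * (D * real r powr (- M))"
      using B1 unfolding D_def by (intro mult_left_mono) auto
    also have "\<dots> = D * (real K * real K * (real r * (real r powr (- M) / real r)))"
      unfolding rr by (simp add: ac_simps)
    also have "\<dots> = D * ((real K * real K * real r) * (real r powr (- M) / real r))"
      by (simp add: ac_simps)
    also have "\<dots> \<le> D * (real n * (real r powr (- M) / real r))"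
      using KKr D0 r0 by (intro mult_left_mono mult_right_mono) auto
    also have "\<dots> = D * (real n * real r powr (- (M + 1)))"
      unfolding rM ..
    also have "\<dots> \<le> D * (real n * (real n powr (- (x * (M + 1))) * 2 powr (M + 1)))"
      using rle0 D0 n1r unfolding rle1 by (intro mult_left_mono) auto
    also have "\<dots> = D * 2 powr (M + 1) * (real n * real n powr (- (x * (M + 1))))"
      by (simp add: ac_simps)
    also have "\<dots> = D * 2 powr (M + 1) * real n powr a"
      unfolding nn ..
    finally have B3: "real K * real K * (\<beta> / \<delta> + \<alpha>) \<le> D * 2 powr (M + 1) * real n powr a" .
    have E0: "0 \<le> (\<integral>\<omega>. (\<Prod>j<n. g ((shift^^j) \<omega>)) \<partial>P)"
      using gb T_space by (intro integral_nonneg_AE AE_I2 prod_nonneg) auto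
    have CC: "Ctot * real n powr a = Cg * 2 powr Pm * real n powr a + D * 2 powr (M + 1) * real n powr a"
      unfolding Ctot_def D_def by (simp add: distrib_right)
    have "(\<integral>\<omega>. (\<Prod>j<n. g ((shift ^^ j) \<omega>)) \<partial>P) \<le> Ctot * real n powr a"
      using E1 A2 B3 unfolding CC by linarith
    then show "norm (\<integral>\<omega>. (\<Prod>j<n. g ((shift ^^ j) \<omega>)) \<partial>P) \<le> Ctot * norm (real n powr a)"
      using E0 by simp
  qed
  then show ?thesis unfolding a_def by (rule bigoI)
qed

end

theorem lemma3p3:
  fixes M0 :: "'a measure" and P :: "(int \<Rightarrow> 'a) measure"
    and g :: "(int \<Rightarrow> 'a) \<Rightarrow> real" and M :: real
  assumes "prob_space P"
    and "sets P = sets (Pi\<^sub>M UNIV (\<lambda>_::int. M0))"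
    and "shift \<in> P \<rightarrow>\<^sub>M P" and "distr P P shift = P"
    and "g \<in> borel_measurable P"
    and "\<And>\<omega>. \<omega> \<in> space P \<Longrightarrow> 0 \<le> g \<omega> \<and> g \<omega> \<le> 1"
    and "(\<integral>\<omega>. g \<omega> \<partial>P) < 1"
    and "M > 0"
    and "(\<lambda>r. beta1 M0 P g r + alpha_mix M0 P r) \<in> O(\<lambda>r. real r powr (- M))"
  shows "\<forall>x. 0 < x \<and> x < 1 \<longrightarrow>
     (\<lambda>n. \<integral>\<omega>. (\<Prod>j<n. g ((shift ^^ j) \<omega>)) \<partial>P) \<in> O(\<lambda>n. real n powr (1 - x * (M + 1)))"
  proof (intro allI impI)
  fix x :: real assume x: "0 < x \<and> x < 1"
  interpret stat M0 P g by (rule stat.intro[OF assms(1-6)])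
  show "(\<lambda>n. \<integral>\<omega>. (\<Prod>j<n. g ((shift ^^ j) \<omega>)) \<partial>P) \<in> O(\<lambda>n. real n powr (1 - x * (M + 1)))"
    using final[OF assms(7-9)] x by blast
qed

end
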